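(* Let $\mathcal M'=\bigcup_{K=1}^{\min(M+1,N)}\mathcal F_K^{\mathrm{in}}\times \mathcal Q_K^{\mathrm{an}}$. Then $\mathcal M'$ is identifiable: for all $(F^1,Q^1),(F^2,Q^2)\in\mathcal M'$, $F^1Q^1=F^2Q^2$ implies $(F^1,Q^1)\sim(F^2,Q^2)$.
   Context: Fix positive integers $M$ and $N$. For a positive integer $K$, $\mathcal F_K$ is the set of real $M\times K$ matrices with all entries in $[0,1]$, and $\mathcal Q_K$ is the set of real $K\times N$ matrices with entries in $[0,1]$ each of whose columns sums to $1$. $e_k$ denotes the $k$-th standard basis vector, and $A_{\star j}$ denotes the $j$-th column of a matrix $A$. $\mathcal Q_K^{\mathrm{an}}$ is the set of $Q\in\mathcal Q_K$ such that for every $k\in\{1,\dots,K\}$ there is $i\in\{1,\dots,N\}$ with $Q_{\star i}=e_k$. $\mathcal F_K^{\mathrm{in}}$ is the set of $F\in\mathcal F_K$ such that the vectors $F_{\star 1}-F_{\star K},\dots,F_{\star K-1}-F_{\star K}$ are linearly independent (a vacuous condition when $K=1$). Two pairs are equivalent, $(F^1,Q^1)\sim(F^2,Q^2)$, if $F^1,F^2$ have the same number $K$ of columns and there is a permutation $\pi$ of $\{1,\dots,K\}$ with $F^2_{sk}=F^1_{s\pi(k)}$ and $Q^2_{ki}=Q^1_{\pi(k)i}$ for all $s,k,i$. A set $\mathcal M\subseteq\bigcup_{K\ge1}\mathcal F_K\times\mathcal Q_K$ is called identifiable if for all $(F^1,Q^1),(F^2,Q^2)\in\mathcal M$, $F^1Q^1=F^2Q^2$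 implies $(F^1,Q^1)\sim(F^2,Q^2)$. *)

theory Defs
  imports Complex_Main
begin

text \<open>Matrices of varying size are represented as functions nat => nat => real,
  with explicit index bounds: an M x K matrix F has entries F s k for s < M, k < K
  (indices are 0-based). Entries outside the bounds are irrelevant.\<close>

definition F_set :: "nat \<Rightarrow> nat \<Rightarrow> (nat \<Rightarrow> nat \<Rightarrow> real) \<Rightarrow> bool" where
  "F_set M K F \<longleftrightarrow> (\<forall>s<M. \<forall>k<K. 0 \<le> F s k \<and> F s k \<le> 1)"

definition Q_set :: "nat \<Rightarrow> nat \<Rightarrow> (nat \<Rightarrow> nat \<Rightarrow> real) \<Rightarrow> bool" where
  "Q_set K N Q \<longleftrightarrow> (\<forall>k<K. \<forall>i<N. 0 \<le> Q k i \<and> Q k i \<le> 1)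
                    \<and> (\<forall>i<N. (\<Sum>k<K. Q k i) = 1)"

definition Q_an :: "nat \<Rightarrow> nat \<Rightarrow> (nat \<Rightarrow> nat \<Rightarrow> real) \<Rightarrow> bool" where
  "Q_an K N Q \<longleftrightarrow> Q_set K N Q \<and>
     (\<forall>k<K. \<exists>i<N. \<forall>k'<K. Q k' i = (if k' = k then 1 else 0))"

text \<open>F in F_K^in: the family of columns F_k - F_K (k = 1..K-1, here 0..K-2 minus
  column K-1) is linearly independent in R^M.\<close>
definition F_in :: "nat \<Rightarrow> nat \<Rightarrow> (nat \<Rightarrow> nat \<Rightarrow> real) \<Rightarrow> bool" where
  "F_in M K F \<longleftrightarrow> F_set M K F \<and>
     (\<forall>c :: nat \<Rightarrow> real.
        (\<forall>s<M. (\<Sum>k<K - 1. c k * (F s k - F s (K - 1))) = 0) \<longrightarrow> (\<forall>k<K - 1. c k = 0))"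

definition mat_prod :: "nat \<Rightarrow> (nat \<Rightarrow> nat \<Rightarrow> real) \<Rightarrow> (nat \<Rightarrow> nat \<Rightarrow> real) \<Rightarrow> nat \<Rightarrow> nat \<Rightarrow> real" where
  "mat_prod K F Q s i = (\<Sum>k<K. F s k * Q k i)"

definition pair_equiv :: "nat \<Rightarrow> nat \<Rightarrow> nat \<times> (nat \<Rightarrow> nat \<Rightarrow> real) \<times> (nat \<Rightarrow> nat \<Rightarrow> real)
     \<Rightarrow> nat \<times> (nat \<Rightarrow> nat \<Rightarrow> real) \<times> (nat \<Rightarrow> nat \<Rightarrow> real) \<Rightarrow> bool" where
  "pair_equiv M N P1 P2 \<longleftrightarrow> (case P1 of (K1, F1, Q1) \<Rightarrow> case P2 of (K2, F2, Q2) \<Rightarrow>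
     K1 = K2 \<and> (\<exists>\<pi>. bij_betw \<pi> {..<K1} {..<K1} \<and>
        (\<forall>s<M. \<forall>k<K1. F2 s k = F1 s (\<pi> k)) \<and>
        (\<forall>k<K1. \<forall>i<N. Q2 k i = Q1 (\<pi> k) i)))"

definition model' :: "nat \<Rightarrow> nat \<Rightarrow> (nat \<times> (nat \<Rightarrow> nat \<Rightarrow> real) \<times> (nat \<Rightarrow> nat \<Rightarrow> real)) set" where
  "model' M N = {(K, F, Q). 1 \<le> K \<and> K \<le> min (M + 1) N \<and> F_in M K F \<and> Q_an K N Q}"

definition identifiable :: "nat \<Rightarrow> nat \<Rightarrow> (nat \<times> (nat \<Rightarrow> nat \<Rightarrow> real) \<times> (nat \<Rightarrow> nat \<Rightarrow> real)) set \<Rightarrow> bool" where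
  "identifiable M N \<M> \<longleftrightarrow> (\<forall>(K1, F1, Q1) \<in> \<M>. \<forall>(K2, F2, Q2) \<in> \<M>.
     (\<forall>s<M. \<forall>i<N. mat_prod K1 F1 Q1 s i = mat_prod K2 F2 Q2 s i)
       \<longrightarrow> pair_equiv M N (K1, F1, Q1) (K2, F2, Q2))"

end

theory Submission
  imports Defs
begin

lemma delta_sum:
  fixes f :: "nat \<Rightarrow> real"
  assumes "k < K"
  shows "(\<Sum>i<K. (if i = k then 1 else 0) * f i) = f k"
proof -
  have "(\<Sum>i<K. (if i = k then 1 else 0) * f i) = (\<Sum>i<K. if i = k then f i else 0)"
    by (intro sum.cong) auto
  also have "\<dots> = f k" using assms by (simp add: sum.delta)
  finally show ?thesis .
qed

lemma uniq:
  assumes FI: "F_in M K F" and K: "1 \<le> K"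
    and eq: "\<forall>s<M. (\<Sum>j<K. c j * F s j) = (\<Sum>j<K. d j * F s j)"
    and sm: "(\<Sum>j<K. c j) = (\<Sum>j<K. d j)"
  shows "\<forall>j<K. c j = d j"
proof -
  obtain K' where KK: "K = Suc K'" using K by (cases K) auto
  define e where "e j = c j - d j" for j
  have e0: "\<forall>s<M. (\<Sum>j<K. e j * F s j) = 0"
    using eq by (simp add: e_def left_diff_distrib sum_subtractf)
  have es: "(\<Sum>j<K. e j) = 0" using sm by (simp add: e_def sum_subtractf)
  have elast: "e K' = - (\<Sum>j<K'. e j)" using es by (simp add: KK)
  have "\<forall>s<M. (\<Sum>k<K - 1. e k * (F s k - F s (K - 1))) = 0"
  proof (intro allI impI)
    fix s assume s: "s < M"
    have "(\<Sum>k<K - 1. e k * (F s k - F s (K - 1)))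
        = (\<Sum>k<K'. e k * F s k) - (\<Sum>k<K'. e k) * F s K'"
      by (simp add: KK right_diff_distrib sum_subtractf sum_distrib_right)
    also have "\<dots> = (\<Sum>k<K. e k * F s k)" using elast by (simp add: KK)
    also have "\<dots> = 0" using e0 s by blast
    finally show "(\<Sum>k<K - 1. e k * (F s k - F s (K - 1))) = 0" .
  qed
  then have "\<forall>k<K - 1. e k = 0" using FI unfolding F_in_def by blast
  then have a: "\<forall>k<K'. e k = 0" by (simp add: KK)
  then have "e K' = 0" using elast by simp
  with a have "\<forall>j<K. e j = 0" by (auto simp: KK less_Suc_eq)
  then show ?thesis by (simp add: e_def)
qed

lemma distinct_cols:
  assumes FI: "F_in M K F" and K: "1 \<le> K" and j: "j < K" and k: "k < K"
    and eq: "\<forall>s<M. F s j = F s k"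
  shows "j = k"
proof -
  have "\<forall>s<M. (\<Sum>i<K. (if i = j then 1 else 0) * F s i) = (\<Sum>i<K. (if i = k then 1 else 0) * F s i)"
    using eq j k by (simp add: delta_sum)
  moreover have "(\<Sum>i<K. (if i = j then 1 else 0::real)) = (\<Sum>i<K. (if i = k then 1 else 0))"
    using j k by simp
  ultimately have "\<forall>i<K. (if i = j then 1 else 0::real) = (if i = k then 1 else 0)"
    by (rule uniq[OF FI K, of "\<lambda>i. if i = j then 1 else 0" "\<lambda>i. if i = k then 1 else 0"])
  then have "(if j = j then 1 else 0::real) = (if j = k then 1 else 0)" using j by blast
  then show ?thesis by (simp split: if_splits)
qed

lemma anchor_col:
  assumes an: "Q_an K N Q" and k: "k < K"
  shows "\<exists>i<N. \<forall>s. mat_prod K F Q s i = F s k"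
proof -
  obtain i where i: "i < N" "\<forall>k'<K. Q k' i = (if k' = k then 1 else 0)"
    using an k unfolding Q_an_def by blast
  have "\<forall>s. mat_prod K F Q s i = F s k"
  proof
    fix s
    have "mat_prod K F Q s i = (\<Sum>k'<K. (if k' = k then 1 else 0) * F s k')"
      unfolding mat_prod_def using i(2) by (intro sum.cong) auto
    then show "mat_prod K F Q s i = F s k" using k by (simp add: delta_sum)
  qed
  then show ?thesis using i(1) by blast
qed

lemma match:
  assumes m1: "(K1, F1, Q1) \<in> model' M N" and m2: "(K2, F2, Q2) \<in> model' M N"
    and eq: "\<forall>s<M. \<forall>i<N. mat_prod K1 F1 Q1 s i = mat_prod K2 F2 Q2 s i"
    and k: "k < K1"
  shows "\<exists>l<K2. \<forall>s<M. F2 s l = F1 s k"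
proof -
  have K1: "1 \<le> K1" and FI1: "F_in M K1 F1" and an1: "Q_an K1 N Q1"
    and K2: "1 \<le> K2" and an2: "Q_an K2 N Q2"
    using m1 m2 by (auto simp: model'_def)
  have Q1s: "Q_set K1 N Q1" using an1 by (simp add: Q_an_def)
  have Q2s: "Q_set K2 N Q2" using an2 by (simp add: Q_an_def)
  obtain i where i: "i < N" "\<forall>s. mat_prod K1 F1 Q1 s i = F1 s k"
    using anchor_col[OF an1 k] by blast
  have "\<forall>l. \<exists>i'. l < K2 \<longrightarrow> i' < N \<and> (\<forall>s. mat_prod K2 F2 Q2 s i' = F2 s l)"
    using anchor_col[OF an2] by blast
  from choice[OF this] obtain g where g0: "\<forall>l. l < K2 \<longrightarrow> g l < N \<and> (\<forall>s. mat_prod K2 F2 Q2 s (g l) = F2 s l)"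
    by blast
  have g: "g l < N \<and> (\<forall>s. mat_prod K2 F2 Q2 s (g l) = F2 s l)" if "l < K2" for l
    using g0 that by blast
  have F2g: "F2 s l = (\<Sum>j<K1. Q1 j (g l) * F1 s j)" if "s < M" "l < K2" for s l
  proof -
    have "F2 s l = mat_prod K2 F2 Q2 s (g l)" using g[OF that(2)] by simp
    also have "\<dots> = mat_prod K1 F1 Q1 s (g l)" using eq that g[OF that(2)] by simp
    also have "\<dots> = (\<Sum>j<K1. Q1 j (g l) * F1 s j)" by (simp add: mat_prod_def mult.commute)
    finally show ?thesis .
  qed
  define c where "c j = (\<Sum>l<K2. Q2 l i * Q1 j (g l))" for j
  have "\<forall>s<M. (\<Sum>j<K1. c j * F1 s j) = (\<Sum>j<K1. (if j = k then 1 else 0) * F1 s j)"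
  proof (intro allI impI)
    fix s assume s: "s < M"
    have "(\<Sum>j<K1. (if j = k then 1 else 0) * F1 s j) = F1 s k" using k
      by (rule delta_sum)
    also have "\<dots> = mat_prod K2 F2 Q2 s i" 
    proof -
      have "mat_prod K1 F1 Q1 s i = mat_prod K2 F2 Q2 s i" using eq s i(1) by blast
      then show ?thesis using i(2) by simp
    qed
    also have "\<dots> = (\<Sum>l<K2. Q2 l i * (\<Sum>j<K1. Q1 j (g l) * F1 s j))"
      unfolding mat_prod_def using F2g s by (simp add: mult.commute)
    also have "\<dots> = (\<Sum>l<K2. \<Sum>j<K1. Q2 l i * (Q1 j (g l) * F1 s j))"
      by (simp add: sum_distrib_left)
    also have "\<dots> = (\<Sum>j<K1. \<Sum>l<K2. Q2 l i * (Q1 j (g l) * F1 s j))"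
      by (rule sum.swap)
    also have "\<dots> = (\<Sum>j<K1. c j * F1 s j)"
      by (simp add: c_def sum_distrib_right mult.assoc)
    finally show "(\<Sum>j<K1. c j * F1 s j) = (\<Sum>j<K1. (if j = k then 1 else 0) * F1 s j)" by simp
  qed
  moreover have "(\<Sum>j<K1. c j) = (\<Sum>j<K1. (if j = k then 1 else 0::real))"
  proof -
    have "(\<Sum>j<K1. c j) = (\<Sum>j<K1. \<Sum>l<K2. Q2 l i * Q1 j (g l))"
      by (simp add: c_def)
    also have "\<dots> = (\<Sum>l<K2. \<Sum>j<K1. Q2 l i * Q1 j (g l))"
      by (rule sum.swap)
    also have "\<dots> = (\<Sum>l<K2. Q2 l i * (\<Sum>j<K1. Q1 j (g l)))"
      by (simp add: sum_distrib_left)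
    also have "\<dots> = (\<Sum>l<K2. Q2 l i)"
      using Q1s g by (simp add: Q_set_def)
    also have "\<dots> = 1" using Q2s i by (simp add: Q_set_def)
    finally show ?thesis using k by simp
  qed
  ultimately have "\<forall>j<K1. c j = (if j = k then 1 else 0)"
    by (rule uniq[OF FI1 K1, of c "\<lambda>j. if j = k then 1 else 0"])
  then have ck: "c k = 1" using k by auto
  have sum1: "(\<Sum>l<K2. Q2 l i) = 1" using Q2s i by (simp add: Q_set_def)
  have "(\<Sum>l<K2. Q2 l i * (1 - Q1 k (g l))) = (\<Sum>l<K2. Q2 l i) - (\<Sum>l<K2. Q2 l i * Q1 k (g l))"
    by (simp add: right_diff_distrib sum_subtractf)
  also have "\<dots> = 1 - c k" by (simp only: sum1 c_def)
  also have "\<dots> = 0" using ck by simp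
  finally have s0: "(\<Sum>l<K2. Q2 l i * (1 - Q1 k (g l))) = 0" .
  have nn: "\<forall>l\<in>{..<K2}. 0 \<le> Q2 l i * (1 - Q1 k (g l))"
  proof
    fix l assume "l \<in> {..<K2}"
    then have lK: "l < K2" by simp
    have "g l < N" using g[OF lK] by blast
    then have "Q1 k (g l) \<le> 1" using Q1s k unfolding Q_set_def by blast
    moreover have "0 \<le> Q2 l i" using Q2s lK i unfolding Q_set_def by blast
    ultimately show "0 \<le> Q2 l i * (1 - Q1 k (g l))" by simp
  qed
  have z: "\<forall>l\<in>{..<K2}. Q2 l i * (1 - Q1 k (g l)) = 0"
    using sum_nonneg_eq_0_iff[of "{..<K2}" "\<lambda>l. Q2 l i * (1 - Q1 k (g l))"] s0 nn by simp
  obtain l where l: "l < K2" "Q2 l i \<noteq> 0"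
  proof (rule ccontr)
    assume "\<not> thesis"
    with that have "\<forall>l<K2. Q2 l i = 0" by blast
    then have "(\<Sum>l<K2. Q2 l i) = 0" by simp
    with sum1 show False by simp
  qed
  have q1: "Q1 k (g l) = 1" using z l by auto
  have gl: "g l < N" using g l by blast
  have col1: "(\<Sum>j<K1. Q1 j (g l)) = 1" using Q1s gl by (simp add: Q_set_def)
  have rest: "(\<Sum>j\<in>{..<K1} - {k}. Q1 j (g l)) = 0"
    using col1 q1 k by (simp add: sum_diff1)
  have nn1: "\<forall>j\<in>{..<K1} - {k}. 0 \<le> Q1 j (g l)"
    using Q1s gl unfolding Q_set_def by blast
  have "\<forall>j\<in>{..<K1} - {k}. Q1 j (g l) = 0"
    using sum_nonneg_eq_0_iff[of "{..<K1} - {k}" "\<lambda>j. Q1 j (g l)"] rest nn1 by simp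
  then have colk: "\<forall>j<K1. Q1 j (g l) = (if j = k then 1 else 0)" using q1 by auto
  have "\<forall>s<M. F2 s l = F1 s k"
  proof (intro allI impI)
    fix s assume s: "s < M"
    have "F2 s l = (\<Sum>j<K1. Q1 j (g l) * F1 s j)" using F2g s l by blast
    also have "\<dots> = (\<Sum>j<K1. (if j = k then 1 else 0) * F1 s j)"
      using colk by (intro sum.cong) auto
    also have "\<dots> = F1 s k" using k by (rule delta_sum)
    finally show "F2 s l = F1 s k" .
  qed
  then show ?thesis using l by blast
qed

lemma one_dir:
  assumes m1: "(K1, F1, Q1) \<in> model' M N" and m2: "(K2, F2, Q2) \<in> model' M N"
    and eq: "\<forall>s<M. \<forall>i<N. mat_prod K1 F1 Q1 s i = mat_prod K2 F2 Q2 s i"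
  obtains p where "\<And>k. k < K1 \<Longrightarrow> p k < K2 \<and> (\<forall>s<M. F2 s (p k) = F1 s k)"
    and "inj_on p {..<K1}"
proof -
  have "\<forall>k. \<exists>l. k < K1 \<longrightarrow> l < K2 \<and> (\<forall>s<M. F2 s l = F1 s k)"
    using match[OF m1 m2 eq] by blast
  from choice[OF this] obtain p where p0: "\<forall>k. k < K1 \<longrightarrow> p k < K2 \<and> (\<forall>s<M. F2 s (p k) = F1 s k)"
    by blast
  have p: "p k < K2 \<and> (\<forall>s<M. F2 s (p k) = F1 s k)" if "k < K1" for k
    using p0 that by blast
  have K1: "1 \<le> K1" and FI1: "F_in M K1 F1" using m1 by (auto simp: model'_def)
  have "inj_on p {..<K1}"
  proof (rule inj_onI)
    fix x y assume x: "x \<in> {..<K1}" and y: "y \<in> {..<K1}" and pxy: "p x = p y"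
    have "\<forall>s<M. F1 s x = F1 s y"
    proof (intro allI impI)
      fix s assume s: "s < M"
      have "F1 s x = F2 s (p x)" using p[of x] x s by simp
      also have "\<dots> = F2 s (p y)" using pxy by simp
      also have "\<dots> = F1 s y" using p[of y] y s by simp
      finally show "F1 s x = F1 s y" .
    qed
    then show "x = y" using distinct_cols[OF FI1 K1] x y by blast
  qed
  then show ?thesis using that p by blast
qed

theorem mainTheorem1:
  fixes M N :: nat
  assumes "0 < M" and "0 < N"
  shows "identifiable M N (model' M N)"
  unfolding identifiable_def
proof (clarify)
  fix K1 F1 Q1 K2 F2 Q2
  assume m1: "(K1, F1, Q1) \<in> model' M N" and m2: "(K2, F2, Q2) \<in> model' M N"
    and eq: "\<forall>s<M. \<forall>i<N. mat_prod K1 F1 Q1 s i = mat_prod K2 F2 Q2 s i"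
  have eq': "\<forall>s<M. \<forall>i<N. mat_prod K2 F2 Q2 s i = mat_prod K1 F1 Q1 s i" using eq by simp
  obtain p1 where p1: "\<And>k. k < K1 \<Longrightarrow> p1 k < K2 \<and> (\<forall>s<M. F2 s (p1 k) = F1 s k)"
    and i1: "inj_on p1 {..<K1}" using one_dir[OF m1 m2 eq] by blast
  obtain p where p: "\<And>k. k < K2 \<Longrightarrow> p k < K1 \<and> (\<forall>s<M. F1 s (p k) = F2 s k)"
    and ip: "inj_on p {..<K2}" using one_dir[OF m2 m1 eq'] by blast
  have "card (p1 ` {..<K1}) \<le> card {..<K2}"
    by (intro card_mono) (use p1 in auto)
  then have le1: "K1 \<le> K2" using card_image[OF i1] by simp
  have "card (p ` {..<K2}) \<le> card {..<K1}"
    by (intro card_mono) (use p in auto)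
  then have le2: "K2 \<le> K1" using card_image[OF ip] by simp
  have KK: "K1 = K2" using le1 le2 by simp
  have sub: "p ` {..<K2} \<subseteq> {..<K2}" using p KK by auto
  have bij: "bij_betw p {..<K2} {..<K2}"
    unfolding bij_betw_def using ip endo_inj_surj[OF _ sub ip] by simp
  have K2: "1 \<le> K2" and FI2: "F_in M K2 F2" and an2: "Q_an K2 N Q2"
    and an1: "Q_an K1 N Q1" using m1 m2 by (auto simp: model'_def)
  have Q1s: "Q_set K1 N Q1" using an1 by (simp add: Q_an_def)
  have Q2s: "Q_set K2 N Q2" using an2 by (simp add: Q_an_def)
  have Qeq: "\<forall>l<K2. Q2 l i = Q1 (p l) i" if i: "i < N" for i
  proof -
    have "\<forall>s<M. (\<Sum>l<K2. Q2 l i * F2 s l) = (\<Sum>l<K2. Q1 (p l) i * F2 s l)"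
    proof (intro allI impI)
      fix s assume s: "s < M"
      have "(\<Sum>l<K2. Q2 l i * F2 s l) = mat_prod K2 F2 Q2 s i"
        by (simp add: mat_prod_def mult.commute)
      also have "\<dots> = mat_prod K1 F1 Q1 s i" using eq s i by simp
      also have "\<dots> = (\<Sum>k<K2. Q1 k i * F1 s k)"
        by (simp add: mat_prod_def mult.commute KK)
      also have "\<dots> = (\<Sum>l<K2. Q1 (p l) i * F1 s (p l))"
        using sum.reindex_bij_betw[OF bij, of "\<lambda>k. Q1 k i * F1 s k"] by simp
      also have "\<dots> = (\<Sum>l<K2. Q1 (p l) i * F2 s l)"
        using p s by (intro sum.cong) auto
      finally show "(\<Sum>l<K2. Q2 l i * F2 s l) = (\<Sum>l<K2. Q1 (p l) i * F2 s l)" .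
    qed
    moreover have "(\<Sum>l<K2. Q2 l i) = (\<Sum>l<K2. Q1 (p l) i)"
    proof -
      have "(\<Sum>l<K2. Q2 l i) = 1" using Q2s i by (simp add: Q_set_def)
      also have "\<dots> = (\<Sum>k<K2. Q1 k i)" using Q1s i KK by (simp add: Q_set_def)
      also have "\<dots> = (\<Sum>l<K2. Q1 (p l) i)"
        using sum.reindex_bij_betw[OF bij, of "\<lambda>k. Q1 k i"] by simp
      finally show ?thesis .
    qed
    ultimately show ?thesis
      by (rule uniq[OF FI2 K2, of "\<lambda>l. Q2 l i" "\<lambda>l. Q1 (p l) i"])
  qed
  show "pair_equiv M N (K1, F1, Q1) (K2, F2, Q2)"
    unfolding pair_equiv_def
    using KK bij p Qeq by auto
qed

end
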